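(* Let $n\ge3$. All roots of $\Phi_n(x)=0$ are real, and they are simple except $x=2$, which is a double root. Let $\tilde\alpha_n$ be the minimal root. If $n$ is even, then \[ \tilde\alpha_n=\alpha^{(n)}_n=2\cos\frac{n\pi}{n+1}=-2\cos\frac{\pi}{n+1}. \] If $n$ is odd, then $-2<\tilde\alpha_n<\alpha^{(n)}_n$.
   Context: $U_n$ is the Chebyshev polynomial of the second kind, $U_n(\cos\theta)=\sin((n+1)\theta)/\sin\theta$, $\tilde U_n(x)=U_n(x/2)$, and $\Phi_n(x)=((n+1)x^2-6x-4n)\tilde U_n(x)+2(x+2)\tilde U_{n-1}(x)+2(x+2)$. For $1\le l\le n$, $\alpha^{(n)}_l=2\cos\frac{l\pi}{n+1}$. *)

theory Defs
  imports "HOL-Analysis.Analysis" "HOL-Computational_Algebra.Polynomial"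
begin

fun chebU :: "nat \<Rightarrow> 'a::comm_ring_1 poly" where
  "chebU 0 = 1"
| "chebU (Suc 0) = [:0, 2:]"
| "chebU (Suc (Suc n)) = [:0, 2:] * chebU (Suc n) - chebU n"

definition chebUt :: "nat \<Rightarrow> complex poly" where
  "chebUt n = pcompose (chebU n) [:0, 1/2:]"

definition Phi :: "nat \<Rightarrow> complex poly" where
  "Phi n = [:- 4 * of_nat n, -6, of_nat n + 1:] * chebUt n
          + [:4, 2:] * chebUt (n - 1) + [:4, 2:]"

definition alpha :: "nat \<Rightarrow> nat \<Rightarrow> real" where
  "alpha n l = 2 * cos (real l * pi / real (n + 1))"

end

theory Submission
  imports Defs
begin

lemma chebU_of_real: "poly (chebU n :: complex poly) (of_real y) = of_real (poly (chebU n) y)"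
  by (induction n rule: chebU.induct) auto

lemma chebU_cos: "sin t * poly (chebU n) (cos t) = sin (real (Suc n) * t)"
proof (induction n rule: chebU.induct)
  case 1 then show ?case by simp
next
  case 2 then show ?case by (simp add: sin_double)
next
  case (3 n)
  define a where "a = real (Suc (Suc n)) * t"
  have e1: "real (Suc (Suc (Suc n))) * t = a + t" unfolding a_def by (simp add: algebra_simps)
  have e2: "real (Suc n) * t = a - t" unfolding a_def by (simp add: algebra_simps)
  have "sin t * poly (chebU (Suc (Suc n))) (cos t) = 2 * cos t * (sin t * poly (chebU (Suc n)) (cos t)) - sin t * poly (chebU n) (cos t)"
    by (simp add: algebra_simps)
  also have "\<dots> = 2 * cos t * sin a - sin (a - t)"
  proof -
    have i1: "sin t * poly (chebU (Suc n)) (cos t) = sin a" using 3(1) unfolding a_def .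
    have i2: "sin t * poly (chebU n) (cos t) = sin (a - t)" unfolding e2[symmetric] using 3(2) .
    show ?thesis unfolding i1 i2 ..
  qed
  also have "\<dots> = sin (a + t)" by (simp add: sin_add sin_diff)
  finally show ?case unfolding e1 .
qed

definition phiR :: "nat \<Rightarrow> real \<Rightarrow> real" where
  "phiR n x = ((real n + 1) * x^2 - 6 * x - 4 * real n) * poly (chebU n) (x/2)
     + 2 * (x + 2) * poly (chebU (n - 1)) (x/2) + 2 * (x + 2)"

lemma chebUt_real: "poly (chebUt m) (of_real x) = of_real (poly (chebU m) (x/2))"
proof -
  have "poly [:0, 1/2:] (complex_of_real x) = of_real (x/2)" by simp
  then show ?thesis by (simp only: chebUt_def poly_pcompose chebU_of_real)
qed

lemma Phi_real: "poly (Phi n) (of_real x) = of_real (phiR n x)"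
  by (simp add: Phi_def chebUt_real phiR_def) (simp add: algebra_simps power2_eq_square)

definition FF :: "nat \<Rightarrow> real \<Rightarrow> real" where
  "FF n h = ((real n + 2) * cos h ^ 2 - 1) * sin h * cos ((real n + 1) * h) - cos h ^ 3 * sin ((real n + 1) * h)"

lemma key0: "sin (2*h) * (phiR (Suc k) (2 * cos (2*h)) * cos h) = sin (2*h) * (-16 * sin ((real (Suc k) + 1) * h) * FF (Suc k) h)"
proof -
  define S where "S = sin ((real k + 2) * h)"
  define C where "C = cos ((real k + 2) * h)"
  define s where "s = sin h"
  define c where "c = cos h"
  define U1 where "U1 = poly (chebU (Suc k)) (cos (2*h))"
  define U0 where "U0 = poly (chebU k) (cos (2*h))"
  have u1: "sin (2*h) * U1 = sin (real (Suc (Suc k)) * (2*h))" unfolding U1_def by (rule chebU_cos)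
  have u2: "sin (2*h) * U0 = sin (real (Suc k) * (2*h))" unfolding U0_def by (rule chebU_cos)
  have sA: "sin (real (Suc (Suc k)) * (2*h)) = 2 * S * C"
  proof -
    have "real (Suc (Suc k)) * (2*h) = 2 * ((real k + 2) * h)" by (simp add: algebra_simps)
    then show ?thesis unfolding S_def C_def by (simp only: sin_double)
  qed
  have s2: "sin (2*h) = 2 * s * c" unfolding s_def c_def by (simp add: sin_double)
  have c2: "cos (2*h) = 2 * c^2 - 1" unfolding c_def by (simp add: cos_double_cos)
  have sB: "sin (real (Suc k) * (2*h)) = 2 * S * C * (2 * c^2 - 1) - (1 - 2 * S^2) * (2 * s * c)"
  proof -
    have e: "real (Suc k) * (2*h) = 2 * ((real k + 2) * h) - 2 * h" by (simp add: algebra_simps)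
    have "sin (2 * ((real k + 2) * h)) = 2 * S * C" unfolding S_def C_def by (simp only: sin_double)
    moreover have "cos (2 * ((real k + 2) * h)) = 1 - 2 * S^2" unfolding S_def by (simp only: cos_double_sin)
    ultimately show ?thesis unfolding e sin_diff s2 c2 by simp
  qed
  have ss: "s^2 = 1 - c^2" unfolding s_def c_def by (simp add: sin_squared_eq)
  have ph: "phiR (Suc k) (2 * cos (2*h)) = ((real k + 2) * (2 * (2 * c^2 - 1))^2 - 6 * (2 * (2 * c^2 - 1)) - 4 * (real k + 1)) * U1
      + 2 * (2 * (2 * c^2 - 1) + 2) * U0 + 2 * (2 * (2 * c^2 - 1) + 2)"
    unfolding phiR_def U1_def U0_def c2[symmetric] by (simp add: algebra_simps)
  have ff: "FF (Suc k) h = ((real k + 3) * c^2 - 1) * s * C - c^3 * S"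
    unfolding FF_def S_def C_def s_def c_def by (simp add: algebra_simps)
  have v1: "2 * s * c * U1 = 2 * S * C" using u1 unfolding sA s2 .
  have v2: "2 * s * c * U0 = 2 * S * C * (2 * c^2 - 1) - (1 - 2 * S^2) * (2 * s * c)" using u2 unfolding sB s2 .
  define A where "A = (real k + 2) * (2 * (2 * c^2 - 1))^2 - 6 * (2 * (2 * c^2 - 1)) - 4 * (real k + 1)"
  define B where "B = 2 * (2 * (2 * c^2 - 1) + 2)"
  have "(2 * s * c) * ((A * U1 + B * U0 + B) * c) = c * (A * (2 * s * c * U1) + B * (2 * s * c * U0) + B * (2 * s * c))"
    by algebra
  also have "\<dots> = c * (A * (2 * S * C) + B * (2 * S * C * (2 * c^2 - 1) - (1 - 2 * S^2) * (2 * s * c)) + B * (2 * s * c))"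
    by (simp only: v1 v2)
  also have "\<dots> = -32 * (1 - c^2) * c * S * C * ((real k + 3) * c^2 - 1) + 32 * s * c^4 * S^2"
    unfolding A_def B_def by (simp add: algebra_simps power2_eq_square power3_eq_cube power4_eq_xxxx)
  also have "\<dots> = (2 * s * c) * (-16 * S * (((real k + 3) * c^2 - 1) * s * C - c^3 * S))"
    unfolding ss[symmetric] by algebra
  finally have G: "(2 * s * c) * ((A * U1 + B * U0 + B) * c) = (2 * s * c) * (-16 * S * (((real k + 3) * c^2 - 1) * s * C - c^3 * S))" .
  have sS: "sin ((real (Suc k) + 1) * h) = S" unfolding S_def by (simp add: algebra_simps)
  have ph': "phiR (Suc k) (2 * cos (2*h)) = A * U1 + B * U0 + B" unfolding ph A_def B_def ..
  show ?thesis unfolding ph' ff s2 sS c_def[symmetric] by (rule G)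
qed

fun bseq :: "int \<Rightarrow> int \<Rightarrow> nat \<Rightarrow> int" where
  "bseq P Q 0 = 2"
| "bseq P Q (Suc 0) = P"
| "bseq P Q (Suc (Suc i)) = P * bseq P Q (Suc i) - Q^2 * bseq P Q i"

lemma cos_rec: "cos (real (Suc (Suc i)) * x) = 2 * cos x * cos (real (Suc i) * x) - cos (real i * x)"
proof -
  define a where "a = real (Suc i) * x"
  have e1: "real (Suc (Suc i)) * x = a + x" unfolding a_def by (simp add: algebra_simps)
  have e2: "real i * x = a - x" unfolding a_def by (simp add: algebra_simps)
  show ?thesis unfolding e1 e2 a_def[symmetric] by (simp add: cos_add cos_diff)
qed

lemma bseq_cos:
  assumes "real_of_int Q * (2 * cos x) = of_int P"
  shows "real_of_int (bseq P Q i) = of_int Q ^ i * (2 * cos (real i * x))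
       \<and> real_of_int (bseq P Q (Suc i)) = of_int Q ^ Suc i * (2 * cos (real (Suc i) * x))"
proof (induction i)
  case 0 then show ?case using assms by simp
next
  case (Suc i)
  then have h1: "real_of_int (bseq P Q i) = of_int Q ^ i * (2 * cos (real i * x))"
     and h2: "real_of_int (bseq P Q (Suc i)) = of_int Q ^ Suc i * (2 * cos (real (Suc i) * x))" by auto
  have "real_of_int (bseq P Q (Suc (Suc i))) = of_int P * of_int (bseq P Q (Suc i)) - of_int Q ^ 2 * of_int (bseq P Q i)"
    by simp
  also have "\<dots> = of_int Q ^ Suc (Suc i) * (2 * cos (real (Suc (Suc i)) * x))"
    unfolding h1 h2 cos_rec assms[symmetric] by (simp add: algebra_simps power2_eq_square)
  finally show ?case using h2 by simp
qed

lemma bseq_cong: "i \<ge> 1 \<Longrightarrow> bseq P Q i mod Q = P ^ i mod Q"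
proof (induction P Q i rule: bseq.induct)
  case (3 P Q i)
  show ?case
  proof (cases i)
    case 0
    have "P * P - Q^2 * 2 = P * P + (-(Q*2)) * Q" by (simp add: algebra_simps power2_eq_square)
    then have "(P * P - Q^2 * 2) mod Q = (P * P) mod Q" by (metis mod_mult_self1)
    then show ?thesis using 0 by (simp add: power2_eq_square)
  next
    case (Suc j)
    then have "bseq P Q (Suc i) mod Q = P ^ Suc i mod Q" using 3 by simp
    then have h: "(P * bseq P Q (Suc i)) mod Q = (P * P ^ Suc i) mod Q" by (metis mod_mult_right_eq)
    have "P * bseq P Q (Suc i) - Q^2 * bseq P Q i = P * bseq P Q (Suc i) + (-(Q * bseq P Q i)) * Q"
      by (simp add: algebra_simps power2_eq_square)
    then have "(P * bseq P Q (Suc i) - Q^2 * bseq P Q i) mod Q = (P * bseq P Q (Suc i)) mod Q"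
      by (metis mod_mult_self1)
    then show ?thesis using h by simp
  qed
qed auto

lemma cheb_int:
  assumes "Q > 1" "coprime P Q" "real_of_int Q * (2 * cos x) = of_int P" "M \<ge> 1"
  shows "cos (real M * x) \<noteq> 1"
proof
  assume c: "cos (real M * x) = 1"
  have "real_of_int (bseq P Q M) = of_int (2 * Q ^ M)" using bseq_cos[OF assms(3), of M] c by simp
  then have "bseq P Q M = 2 * Q ^ M" by linarith
  moreover have "Q dvd 2 * Q ^ M" using assms(4) by (simp add: dvd_power)
  ultimately have "bseq P Q M mod Q = 0" by simp
  then have "P ^ M mod Q = 0" using bseq_cong[OF assms(4), of P Q] by simp
  then have "Q dvd P ^ M" by presburger
  moreover have "coprime (P ^ M) Q" using assms(2) by simp
  ultimately have "is_unit Q" by (meson coprime_absorb_right coprime_commute)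
  then show False using assms(1) by simp
qed

lemma no_coincide:
  fixes m j :: nat
  assumes "m \<ge> 4"
  shows "(real m + 1) * cos (real j * pi / real m) ^ 2 \<noteq> 1"
proof
  assume h: "(real m + 1) * cos (real j * pi / real m) ^ 2 = 1"
  define x where "x = 2 * (real j * pi / real m)"
  have cx: "cos x = 2 * cos (real j * pi / real m) ^ 2 - 1" unfolding x_def by (simp only: cos_double_cos)
  have "(real m + 1) * (2 * cos x) = 2 * (1 - real m)"
    unfolding cx using h by (simp add: algebra_simps)
  define a :: int where "a = 2 * (1 - int m)"
  define b :: int where "b = int m + 1"
  define g where "g = gcd a b"
  have b0: "b \<noteq> 0" unfolding b_def by simp
  have g0: "g > 0" unfolding g_def using b0 by simp
  have ga: "a = (a div g) * g" and gb: "b = (b div g) * g" unfolding g_def by simp_all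
  have eq: "real_of_int b * (2 * cos x) = of_int a" unfolding a_def b_def using \<open>(real m + 1) * (2 * cos x) = 2 * (1 - real m)\<close> by simp
  have eq2: "real_of_int (b div g) * (2 * cos x) = of_int (a div g)"
  proof -
    have "real_of_int (b div g) * of_int g * (2 * cos x) = of_int (a div g) * of_int g"
      using eq gb ga by (metis of_int_mult)
    then show ?thesis using g0 by (simp add: algebra_simps)
  qed
  have cop: "coprime (a div g) (b div g)" unfolding g_def using b0 by (simp add: div_gcd_coprime)
  have bg: "b div g > 1"
  proof -
    have "0 < b" unfolding b_def by simp
    then have "0 < (b div g) * g" using gb by simp
    then have "b div g > 0" using g0 by (simp add: zero_less_mult_iff)
    moreover have "b div g \<noteq> 1"
    proof
      assume "b div g = 1"
      then have "g = b" using gb by simp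
      then have "b dvd a" unfolding g_def by (metis gcd_dvd1)
      then have "b dvd a + 2 * b" by simp
      moreover have "a + 2 * b = 4" unfolding a_def b_def by simp
      ultimately have "b dvd 4" by simp
      then have "b \<le> 4" by (simp add: zdvd_imp_le)
      then show False using assms unfolding b_def by simp
    qed
    ultimately show ?thesis by simp
  qed
  have "cos (real m * x) \<noteq> 1"
    by (rule cheb_int[OF bg _ eq2]) (use cop assms in \<open>auto simp: coprime_commute\<close>)
  moreover have "real m * x = 2 * real j * pi" unfolding x_def using assms by simp
  ultimately show False by simp
qed

lemma chebU_deg: "degree (chebU n :: 'a::comm_ring_1 poly) \<le> n"
proof (induction n rule: chebU.induct)
  case (3 n)
  have "degree ([:0, 2:] * chebU (Suc n) :: 'a poly) \<le> Suc (Suc n)"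
    by (rule order.trans[OF degree_mult_le]) (use 3 in \<open>auto intro: order.trans[OF degree_pCons_le]\<close>)
  then show ?case using 3 by (simp add: degree_diff_le)
qed (auto simp: degree_pCons_le)

lemma chebUt_deg: "degree (chebUt n) \<le> n"
  unfolding chebUt_def by (simp add: degree_pcompose chebU_deg)

lemma Phi_deg: "degree (Phi n) \<le> n + 2"
proof -
  have q: "degree ([:a, b, c:] :: complex poly) \<le> 2" for a b c
    by (metis One_nat_def Suc_1 Suc_le_mono degree_pCons_le le_trans degree_pCons_0 le_zero_eq zero_le)
  have l: "degree ([:a, b:] :: complex poly) \<le> 1" for a b
    by (metis One_nat_def degree_pCons_le degree_pCons_0 le_trans Suc_le_mono)
  have d1: "degree ([:- 4 * of_nat n, -6, of_nat n + 1:] * chebUt n) \<le> n + 2"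
    using degree_mult_le[of "[:- 4 * of_nat n, -6, of_nat n + 1:]" "chebUt n"] q[of "- 4 * of_nat n" "-6" "of_nat n + 1"] chebUt_deg[of n]
    by linarith
  have d2: "degree ([:4, 2:] * chebUt (n - 1)) \<le> n + 2"
    using degree_mult_le[of "[:4, 2:]" "chebUt (n-1)"] l[of 4 2] chebUt_deg[of "n-1"]
    by linarith
  have d3: "degree ([:4, 2:] :: complex poly) \<le> n + 2" using l[of 4 2] by linarith
  show ?thesis unfolding Phi_def
    by (intro degree_add_le d1 d2 d3)
qed

lemma chebU_1: "poly (chebU n :: 'a::comm_ring_1 poly) 1 = of_nat (Suc n)"
  by (induction n rule: chebU.induct) (auto simp: algebra_simps)

lemma chebU_d1: "3 * poly (pderiv (chebU n :: 'a::idom poly)) 1 = of_nat (n * Suc n * (n+2))"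
  by (induction n rule: chebU.induct) (auto simp: algebra_simps pderiv_mult pderiv_diff pderiv_pCons pderiv_smult chebU_1)

lemma Phi_2: "poly (Phi (Suc k)) 2 = 0"
  by (simp add: Phi_def chebUt_def poly_pcompose chebU_1 algebra_simps)

lemma Phi_d2: "poly (pderiv (Phi (Suc k))) 2 = 0"
proof -
  have a: "poly (pderiv (chebUt m)) 2 = of_nat (m * Suc m * (m+2)) / 6" for m
    using chebU_d1[of m, where 'a=complex]
    by (simp add: chebUt_def pderiv_pcompose poly_pcompose pderiv_pCons field_simps)
  have b: "poly (chebUt m) 2 = of_nat (Suc m)" for m
    by (simp add: chebUt_def poly_pcompose chebU_1)
  show ?thesis
    by (simp add: Phi_def pderiv_mult pderiv_add pderiv_pCons pderiv_smult pderiv_diff a b field_simps)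
qed

lemma root_iff:
  assumes "n \<ge> 1" "0 < h" "h < pi/2"
  shows "phiR n (2 * cos (2*h)) = 0 \<longleftrightarrow> sin ((real n + 1) * h) = 0 \<or> FF n h = 0"
proof -
  obtain k where k: "n = Suc k" using assms(1) by (cases n) auto
  have s: "sin (2*h) > 0" using assms by (intro sin_gt_zero) auto
  have c: "cos h > 0" using assms by (intro cos_gt_zero) auto
  have "phiR (Suc k) (2 * cos (2*h)) * cos h = -16 * sin ((real (Suc k) + 1) * h) * FF (Suc k) h"
    using key0[of h k] s by (metis mult_cancel_left order_less_irrefl)
  then have "phiR n (2 * cos (2*h)) * cos h = -16 * sin ((real n + 1) * h) * FF n h"
    by (simp only: k)
  then show ?thesis using c by (metis mult_eq_0_iff neg_equal_0_iff_equal zero_neq_numeral order_less_irrefl)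
qed

lemma FF_lo: "FF n ((2 * real j - 1) * pi / (2 * (real n + 1))) = cos ((2 * real j - 1) * pi / (2 * (real n + 1))) ^ 3 * (-1) ^ j"
proof -
  have e: "(real n + 1) * ((2 * real j - 1) * pi / (2 * (real n + 1))) = real j * pi - pi/2"
    by (simp add: field_simps)
  show ?thesis unfolding FF_def e by (simp add: cos_diff sin_diff)
qed

lemma FF_hi: "FF n ((2 * real j + 1) * pi / (2 * (real n + 1))) = - (cos ((2 * real j + 1) * pi / (2 * (real n + 1))) ^ 3) * (-1) ^ j"
proof -
  have e: "(real n + 1) * ((2 * real j + 1) * pi / (2 * (real n + 1))) = real j * pi + pi/2"
    by (simp add: field_simps)
  show ?thesis unfolding FF_def e by (simp add: cos_add sin_add)
qed

lemma FF_kk: "FF n (real j * pi / (real n + 1)) = (-1) ^ j * ((real n + 2) * cos (real j * pi / (real n + 1)) ^ 2 - 1) * sin (real j * pi / (real n + 1))"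
proof -
  have e: "(real n + 1) * (real j * pi / (real n + 1)) = real j * pi"
    by (simp add: field_simps)
  show ?thesis unfolding FF_def e by simp
qed

lemma FF_half: "FF n (pi/2) = - cos ((real n + 1) * (pi/2))"
  unfolding FF_def by simp

lemma FF_cont: "continuous_on S (FF n)"
  unfolding FF_def[abs_def] by (intro continuous_intros)

lemma ivt0:
  fixes f :: "real \<Rightarrow> real"
  assumes "a < b" "continuous_on {a..b} f" "f a * f b < 0"
  shows "\<exists>x. a < x \<and> x < b \<and> f x = 0"
proof (cases "f a < 0")
  case True
  then have "f b > 0" using assms(3) by (simp add: mult_less_0_iff)
  then obtain x where "a \<le> x" "x \<le> b" "f x = 0" using IVT'[of f a 0 b] True assms by auto
  then show ?thesis using True \<open>f b > 0\<close> by (metis order_less_le order_less_irrefl)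
next
  case False
  then have "f a > 0" "f b < 0" using assms(3) by (auto simp add: mult_less_0_iff)
  then obtain x where "a \<le> x" "x \<le> b" "f x = 0" using IVT2'[of f b 0 a] assms by auto
  then show ?thesis using \<open>f a > 0\<close> \<open>f b < 0\<close> by (metis order_less_le order_less_irrefl)
qed

lemma sin_nz:
  assumes "(real j - 1/2) * pi < y" "y < (real j + 1/2) * pi" "y \<noteq> real j * pi"
  shows "sin y \<noteq> 0"
proof
  assume "sin y = 0"
  then obtain i :: int where i: "y = of_int i * pi" using sin_zero_iff_int2 by auto
  have "real j - 1/2 < of_int i" using assms(1) unfolding i by (simp add: mult_less_cancel_right)
  then have "of_int (int j - 1) < (of_int i :: real)" by simp
  then have l: "int j - 1 < i" by (simp only: of_int_less_iff)
  have "of_int i < real j + 1/2" using assms(2) unfolding i by (simp add: mult_less_cancel_right)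
  then have "(of_int i :: real) < of_int (int j + 1)" by simp
  then have u: "i < int j + 1" by (simp only: of_int_less_iff)
  have "i = int j" using l u by simp
  then show False using assms(3) i by simp
qed

lemma exists_r:
  fixes n j :: nat
  assumes n3: "n \<ge> 3" and j1: "1 \<le> j" and jn: "2 * j \<le> n + 1"
  shows "\<exists>r. (2 * real j - 1) * pi / (2 * (real n + 1)) < r \<and> r < pi/2
          \<and> r < (2 * real j + 1) * pi / (2 * (real n + 1)) \<and> FF n r = 0
          \<and> sin ((real n + 1) * r) \<noteq> 0 \<and> (2 * j = n \<longrightarrow> r < real j * pi / (real n + 1))"
proof -
  define m where "m = real n + 1"
  have m4: "m \<ge> 4" unfolding m_def using n3 by simp
  define a where "a = (2 * real j - 1) * pi / (2 * m)"
  define b where "b = (2 * real j + 1) * pi / (2 * m)"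
  define c where "c = real j * pi / m"
  have jm: "2 * real j \<le> m" unfolding m_def using jn by linarith
  have j1r: "real j \<ge> 1" using j1 by simp
  have a0: "0 < a" unfolding a_def using j1r m4 by (intro divide_pos_pos mult_pos_pos) auto
  have ac: "a < c" unfolding a_def c_def using m4 by (simp add: field_simps)
  have cb: "c < b" unfolding b_def c_def using m4 by (simp add: field_simps)
  have ab: "a < b" using ac cb by simp
  have a2: "a < pi/2"
  proof -
    have "(2 * real j - 1) * pi < m * pi" using jm pi_gt_zero by (intro mult_strict_right_mono) auto
    then show ?thesis unfolding a_def using m4 by (simp add: field_simps)
  qed
  have ca: "cos a > 0" using a0 a2 by (intro cos_gt_zero) auto
  have Fa: "FF n a = cos a ^ 3 * (-1) ^ j" unfolding a_def m_def by (rule FF_lo)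
  have Fb: "FF n b = - (cos b ^ 3) * (-1) ^ j" unfolding b_def m_def by (rule FF_hi)
  have Fc: "FF n c = (-1) ^ j * ((real n + 2) * cos c ^ 2 - 1) * sin c" unfolding c_def m_def by (rule FF_kk)
  have c0: "0 < c" using a0 ac by simp
  have mpos: "m > 0" using m4 by simp
  have ma: "m * a = (real j - 1/2) * pi" unfolding a_def using mpos by (simp add: field_simps)
  have mb: "m * b = (real j + 1/2) * pi" unfolding b_def using mpos by (simp add: field_simps)
  have mc: "m * c = real j * pi" unfolding c_def using mpos by (simp add: field_simps)
  have sgn: "((-1::real) ^ j) * ((-1) ^ j) = 1" by (simp add: power_mult_distrib[symmetric])
  have cont: "continuous_on {x..y} (FF n)" for x y by (rule FF_cont)
  have sinnz: "sin (m * r) \<noteq> 0" if "a < r" "r < b" "r \<noteq> c" for r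
  proof (rule sin_nz[of j])
    show "(real j - 1/2) * pi < m * r" using that(1) mpos ma by (metis mult_strict_left_mono)
    show "m * r < (real j + 1/2) * pi" using that(2) mpos mb by (metis mult_strict_left_mono)
    show "m * r \<noteq> real j * pi" using that(3) mpos mc by (metis mult_cancel_left order_less_irrefl)
  qed
  consider (A) "2 * j + 1 \<le> n" | (B) "2 * j = n" | (C) "2 * j = n + 1" using jn by linarith
  then obtain r where r: "a < r" "r < b" "r \<noteq> c" "r < pi/2" "FF n r = 0" "2 * j = n \<longrightarrow> r < c"
  proof cases
    case A
    have b2: "b < pi/2" unfolding b_def m_def using A m4 by (simp add: field_simps)
    have cbp: "cos b > 0" using a0 ab b2 by (intro cos_gt_zero) auto
    have sc: "sin c > 0" using c0 cb b2 by (intro sin_gt_zero) auto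
    have "(real (n+1) + 1) * cos (real j * pi / real (n+1)) ^ 2 \<noteq> 1" by (rule no_coincide) (use n3 in simp)
    then have "(real n + 2) * cos c ^ 2 \<noteq> 1" unfolding c_def m_def by (simp add: add.commute)
    then have Fc0: "FF n c \<noteq> 0" using sc unfolding Fc by simp
    have Fab: "FF n a * FF n b < 0"
    proof -
      have "FF n a * FF n b = - (cos a ^ 3 * cos b ^ 3) * ((-1) ^ j * (-1) ^ j)" unfolding Fa Fb by (simp add: algebra_simps)
      then show ?thesis using ca cbp sgn by simp
    qed
    show ?thesis
    proof (cases "FF n a * FF n c < 0")
      case True
      obtain r where "a < r" "r < c" "FF n r = 0" using ivt0[OF ac cont True] by auto
      then show ?thesis using that[of r] cb b2 A by auto
    next
      case False
      have Fa0: "FF n a \<noteq> 0" using Fab by auto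
      have "FF n a * FF n c > 0" using False Fa0 Fc0 by (simp add: not_less order_le_less)
      moreover have "(FF n a * FF n c) * (FF n c * FF n b) < 0"
      proof -
        have e: "(FF n a * FF n c) * (FF n c * FF n b) = (FF n c)^2 * (FF n a * FF n b)" by (simp add: algebra_simps power2_eq_square)
        show ?thesis unfolding e by (rule mult_pos_neg[of "(FF n c)^2" "FF n a * FF n b"]) (use Fab Fc0 in auto)
      qed
      ultimately have "FF n c * FF n b < 0"
      proof -
        assume p: "FF n a * FF n c > 0" and q: "(FF n a * FF n c) * (FF n c * FF n b) < 0"
        show ?thesis
        proof (rule ccontr)
          assume "\<not> FF n c * FF n b < 0"
          then have "0 \<le> FF n c * FF n b" by simp
          then have "0 \<le> (FF n a * FF n c) * (FF n c * FF n b)" using p by simp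
          then show False using q by simp
        qed
      qed
      then obtain r where "c < r" "r < b" "FF n r = 0" using ivt0[OF cb cont] by blast
      then show ?thesis using that[of r] ac b2 A by auto
    qed
  next
    case B
    have n4: "n \<ge> 4" using B n3 by presburger
    have jn2: "real n = 2 * real j" using B by (metis of_nat_mult of_nat_numeral)
    have c2: "c = pi/2 - pi / (2 * m)" unfolding c_def m_def jn2 by (simp add: field_simps)
    have cc: "cos c = sin (pi / (2 * m))" unfolding c2 by (simp add: cos_diff)
    have pm: "0 < pi / (2 * m)" using mpos by simp
    have sp: "sin (pi / (2 * m)) > 0" using pm mpos m4 by (intro sin_gt_zero) (auto simp: field_simps)
    have "sin (pi / (2 * m)) \<le> pi / (2 * m)" using pm by (intro sin_x_le_x) simp
    also have "\<dots> < 2 / m" using pi_less_4 mpos by (simp add: field_simps)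
    finally have "cos c < 2 / m" unfolding cc .
    then have "cos c ^ 2 < (2 / m) ^ 2" using cc sp by (intro power_strict_mono) auto
    then have "(real n + 2) * cos c ^ 2 < (real n + 2) * (2/m)^2" by simp
    also have "\<dots> \<le> 1"
    proof -
      have "4 * n \<le> n * n" using n4 by (intro mult_le_mono1)
      moreover have "(n + 1) * (n + 1) = n * n + 2 * n + 1" by (simp add: algebra_simps)
      moreover have "(n + 2) * 4 = 4 * n + 8" by simp
      ultimately have "(n + 2) * 4 \<le> (n + 1) * (n + 1)" using n4 by linarith
      then have "real ((n + 2) * 4) \<le> real ((n + 1) * (n + 1))" by (simp only: of_nat_le_iff)
      then have "(real n + 2) * 4 \<le> (real n + 1)^2" by (simp add: power2_eq_square algebra_simps)
      then show ?thesis unfolding m_def by (simp add: field_simps power2_eq_square)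
    qed
    finally have lt: "(real n + 2) * cos c ^ 2 - 1 < 0" by simp
    have c2': "c < pi/2" unfolding c2 using pm by simp
    have sc: "sin c > 0" using c0 c2' by (intro sin_gt_zero) auto
    have "FF n a * FF n c = cos a ^ 3 * (((-1) ^ j * (-1) ^ j) * (((real n + 2) * cos c ^ 2 - 1) * sin c))"
      unfolding Fa Fc by (simp add: algebra_simps)
    also have "\<dots> < 0" using ca sgn lt sc by (simp add: mult_pos_neg mult_neg_pos)
    finally obtain r where "a < r" "r < c" "FF n r = 0" using ivt0[OF ac cont] by blast
    then show ?thesis using that[of r] cb c2' by auto
  next
    case C
    have jn2: "real n + 1 = 2 * real j" using C by (metis of_nat_Suc of_nat_mult of_nat_numeral Suc_eq_plus1 add.commute)
    have bh: "pi/2 < b" unfolding b_def m_def jn2 using j1r by (simp add: field_simps)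
    have h2: "(real n + 1) * (pi/2) = real j * pi" unfolding jn2 by simp
    have Fh: "FF n (pi/2) = - ((-1) ^ j)" unfolding FF_half h2 by simp
    have "FF n a * FF n (pi/2) = - (cos a ^ 3 * ((-1) ^ j * (-1) ^ j))" unfolding Fa Fh by (simp add: algebra_simps)
    also have "\<dots> < 0" using ca sgn by simp
    finally obtain r where "a < r" "r < pi/2" "FF n r = 0" using ivt0[OF a2 cont] by blast
    moreover have "c = pi/2" unfolding c_def m_def jn2 using j1r by (simp add: field_simps)
    ultimately show ?thesis using that[of r] bh C by auto
  qed
  have "sin (m * r) \<noteq> 0" using sinnz r by auto
  then show ?thesis using r unfolding a_def b_def c_def m_def by blast
qed

lemma sum_ge_card:
  assumes "finite A" "\<And>x. x \<in> A \<Longrightarrow> f x \<ge> (1::nat)"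
  shows "sum f A \<ge> card A"
proof -
  have "sum (\<lambda>_. 1::nat) A \<le> sum f A" using assms by (intro sum_mono) auto
  then show ?thesis by simp
qed

lemma real_roots_set:
  fixes n :: nat
  assumes n3: "n \<ge> 3"
  shows "\<exists>H. finite H \<and> card H = n \<and> (\<forall>h\<in>H. 0 < h \<and> h < pi/2 \<and> phiR n (2 * cos (2*h)) = 0)
     \<and> (even n \<longrightarrow> real (n div 2) * pi / (real n + 1) \<in> H \<and> (\<forall>h\<in>H. h \<le> real (n div 2) * pi / (real n + 1)))
     \<and> (odd n \<longrightarrow> (\<exists>h\<in>H. real n * pi / (2 * (real n + 1)) < h))"
proof -
  define m where "m = real n + 1"
  have mpos: "m > 0" unfolding m_def by simp
  define J where "J = (n + 1) div 2"
  define K where "K = n div 2"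
  have JK: "J + K = n" unfolding J_def K_def by presburger
  define P where "P = (\<lambda>j r. (2 * real j - 1) * pi / (2 * (real n + 1)) < r \<and> r < pi/2
          \<and> r < (2 * real j + 1) * pi / (2 * (real n + 1)) \<and> FF n r = 0
          \<and> sin ((real n + 1) * r) \<noteq> 0 \<and> (2 * j = n \<longrightarrow> r < real j * pi / (real n + 1)))"
  have "\<forall>j\<in>{1..J}. \<exists>r. P j r"
  proof
    fix j assume "j \<in> {1..J}"
    then have "1 \<le> j" "2 * j \<le> n + 1" unfolding J_def by auto
    then show "\<exists>r. P j r" unfolding P_def using exists_r[OF n3] by blast
  qed
  then obtain r where r: "\<And>j. j \<in> {1..J} \<Longrightarrow> P j (r j)" by metis
  define kk where "kk = (\<lambda>j::nat. real j * pi / m)"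
  define H where "H = r ` {1..J} \<union> kk ` {1..K}"
  have r_lo: "(2 * real j - 1) * pi / (2 * m) < r j" if "j \<in> {1..J}" for j
    using r[OF that] unfolding P_def m_def by auto
  have r_hi: "r j < (2 * real j + 1) * pi / (2 * m)" if "j \<in> {1..J}" for j
    using r[OF that] unfolding P_def m_def by auto
  have r_mono: "r i < r j" if "i \<in> {1..J}" "j \<in> {1..J}" "i < j" for i j
  proof -
    have "real i + 1 \<le> real j" using that(3) by simp
    then have "(2 * real i + 1) * pi \<le> (2 * real j - 1) * pi" using pi_gt_zero by (intro mult_right_mono) auto
    then have "(2 * real i + 1) * pi / (2 * m) \<le> (2 * real j - 1) * pi / (2 * m)" using mpos by (intro divide_right_mono) auto
    then show ?thesis using r_lo[OF that(2)] r_hi[OF that(1)] by linarith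
  qed
  have inj_r: "inj_on r {1..J}"
  proof (rule inj_onI)
    fix i j assume "i \<in> {1..J}" "j \<in> {1..J}" "r i = r j"
    then show "i = j" using r_mono by (metis linorder_neqE_nat order_less_irrefl)
  qed
  have inj_k: "inj_on kk {1..K}"
    by (rule inj_onI) (use mpos pi_gt_zero in \<open>auto simp: kk_def field_simps\<close>)
  have sin_kk: "sin (m * kk j) = 0" for j unfolding kk_def using mpos by simp
  have disj: "r ` {1..J} \<inter> kk ` {1..K} = {}"
  proof (rule ccontr)
    assume "r ` {1..J} \<inter> kk ` {1..K} \<noteq> {}"
    then obtain i j where "i \<in> {1..J}" "r i = kk j" by blast
    then show False using r[of i] sin_kk[of j] unfolding P_def m_def by auto
  qed
  have cardH: "card H = n" unfolding H_def
    by (subst card_Un_disjoint) (use disj inj_r inj_k JK in \<open>auto simp: card_image\<close>)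
  have finH: "finite H" unfolding H_def by simp
  have rootsH: "\<forall>h\<in>H. 0 < h \<and> h < pi/2 \<and> phiR n (2 * cos (2*h)) = 0"
  proof
    fix h assume "h \<in> H"
    then consider (R) j where "j \<in> {1..J}" "h = r j" | (Kc) j where "j \<in> {1..K}" "h = kk j" unfolding H_def by auto
    then show "0 < h \<and> h < pi/2 \<and> phiR n (2 * cos (2*h)) = 0"
    proof cases
      case R
      have "0 < (2 * real j - 1) * pi / (2 * m)" using R(1) mpos by (intro divide_pos_pos mult_pos_pos) auto
      then have h0: "0 < h" using r_lo[OF R(1)] R(2) by linarith
      have h2: "h < pi/2" "FF n h = 0" using r[OF R(1)] R(2) unfolding P_def by auto
      then show ?thesis using h0 root_iff[of n h] n3 by auto
    next
      case Kc
      have h0: "0 < h" unfolding Kc(2) kk_def using Kc(1) mpos by (intro divide_pos_pos mult_pos_pos) auto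
      have "2 * real j < m" using Kc(1) unfolding K_def m_def by auto linarith?
      then have h2: "h < pi/2" unfolding Kc(2) kk_def using mpos pi_gt_zero by (simp add: field_simps)
      have "sin ((real n + 1) * h) = 0" using sin_kk[of j] unfolding Kc(2) m_def .
      then show ?thesis using h0 h2 root_iff[of n h] n3 by auto
    qed
  qed
  have even_part: "even n \<longrightarrow> real (n div 2) * pi / (real n + 1) \<in> H \<and> (\<forall>h\<in>H. h \<le> real (n div 2) * pi / (real n + 1))"
  proof
    assume ev: "even n"
    have K1: "K \<ge> 1" unfolding K_def using n3 by simp
    have inH: "kk K \<in> H" unfolding H_def using K1 by auto
    have bnd: "h \<le> kk K" if hH: "h \<in> H" for h
    proof -
      consider (R) j where "j \<in> {1..J}" "h = r j" | (Kc) j where "j \<in> {1..K}" "h = kk j" using hH unfolding H_def by auto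
      then show ?thesis
      proof cases
        case R
        show ?thesis
        proof (cases "2 * j = n")
          case True
          then have "j = K" unfolding K_def by simp
          then show ?thesis using r[OF R(1)] R(2) True unfolding P_def kk_def m_def by auto
        next
          case False
          have "2 * j \<le> n + 1" using R(1) unfolding J_def by auto
          then have "2 * j + 1 \<le> n" using False ev by presburger
          then have "2 * j + 1 \<le> 2 * K" using ev unfolding K_def by presburger
          then have "2 * real j + 1 \<le> 2 * real K" by (metis of_nat_mult of_nat_numeral of_nat_le_iff of_nat_Suc Suc_eq_plus1 add.commute)
          then have "(2 * real j + 1) * pi \<le> (2 * real K) * pi" using pi_gt_zero by (intro mult_right_mono) auto
          then have "(2 * real j + 1) * pi / (2 * m) \<le> (2 * real K) * pi / (2 * m)" using mpos by (intro divide_right_mono) auto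
          also have "\<dots> = kk K" unfolding kk_def using mpos by (simp add: field_simps)
          finally show ?thesis using r_hi[OF R(1)] R(2) by linarith
        qed
      next
        case Kc
        have "real j * pi \<le> real K * pi" using Kc(1) pi_gt_zero by (intro mult_right_mono) auto
        then show ?thesis unfolding Kc(2) kk_def using mpos by (intro divide_right_mono) auto
      qed
    qed
    show "real (n div 2) * pi / (real n + 1) \<in> H \<and> (\<forall>h\<in>H. h \<le> real (n div 2) * pi / (real n + 1))"
      using inH bnd unfolding kk_def K_def m_def by auto
  qed
  have odd_part: "odd n \<longrightarrow> (\<exists>h\<in>H. real n * pi / (2 * (real n + 1)) < h)"
  proof
    assume od: "odd n"
    have J1: "J \<in> {1..J}" unfolding J_def using n3 by auto
    have "2 * J = n + 1" unfolding J_def using od by presburger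
    then have "2 * real J - 1 = real n" by (metis add_diff_cancel_right' of_nat_1 of_nat_add of_nat_mult of_nat_numeral)
    then have "real n * pi / (2 * (real n + 1)) < r J" using r[OF J1] unfolding P_def by auto
    moreover have "r J \<in> H" unfolding H_def using J1 by auto
    ultimately show "\<exists>h\<in>H. real n * pi / (2 * (real n + 1)) < h" by blast
  qed
  show ?thesis using finH cardH rootsH even_part odd_part by blast
qed

theorem proposition4p12:
  fixes n :: nat
  assumes "n \<ge> 3"
  shows "(\<forall>z. poly (Phi n) z = 0 \<longrightarrow> z \<in> \<real>)
       \<and> order 2 (Phi n) = 2
       \<and> (\<forall>z. poly (Phi n) z = 0 \<and> z \<noteq> 2 \<longrightarrow> order z (Phi n) = 1)
       \<and> (let a = Min {x::real. poly (Phi n) (complex_of_real x) = 0} in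
            (even n \<longrightarrow> a = alpha n n \<and> alpha n n = - 2 * cos (pi / real (n + 1)))
          \<and> (odd n \<longrightarrow> - 2 < a \<and> a < alpha n n))"
proof -
  obtain H where finH: "finite H" and cardH: "card H = n"
    and rootsH: "\<forall>h\<in>H. 0 < h \<and> h < pi/2 \<and> phiR n (2 * cos (2*h)) = 0"
    and evH: "even n \<longrightarrow> real (n div 2) * pi / (real n + 1) \<in> H \<and> (\<forall>h\<in>H. h \<le> real (n div 2) * pi / (real n + 1))"
    and odH: "odd n \<longrightarrow> (\<exists>h\<in>H. real n * pi / (2 * (real n + 1)) < h)"
    using real_roots_set[OF assms] by blast
  obtain k where k: "n = Suc k" using assms by (cases n) auto
  define g where "g = (\<lambda>h::real. 2 * cos (2*h))"
  define X where "X = g ` H"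
  have inj_g: "inj_on g H"
  proof (rule inj_onI)
    fix x y assume "x \<in> H" "y \<in> H" "g x = g y"
    then have "cos (2*x) = cos (2*y)" "0 \<le> 2*x" "2*x \<le> pi" "0 \<le> 2*y" "2*y \<le> pi"
      using rootsH unfolding g_def by (auto simp: less_imp_le)
    then have "2*x = 2*y" using cos_inj_pi by blast
    then show "x = y" by simp
  qed
  have finX: "finite X" unfolding X_def using finH by simp
  have cardX: "card X = n" unfolding X_def using inj_g cardH by (simp add: card_image)
  have gbnd: "-2 < g h \<and> g h < 2" if "0 < h" "h < pi/2" for h
  proof -
    have "cos pi < cos (2*h)" using that by (intro cos_monotone_0_pi) auto
    moreover have "cos (2*h) < cos 0" using that by (intro cos_monotone_0_pi) auto
    ultimately show ?thesis unfolding g_def by simp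
  qed
  have Xp: "-2 < x \<and> x < 2 \<and> phiR n x = 0" if "x \<in> X" for x
    using that rootsH gbnd unfolding X_def by (auto simp: g_def)
  define p where "p = Phi n"
  have p0: "p \<noteq> 0"
  proof
    assume pz: "p = 0"
    define h0 where "h0 = (2 * real 0 + 1) * pi / (2 * (real n + 1))"
    have h0p: "0 < h0" "h0 < pi/2" unfolding h0_def using assms by (auto simp: field_simps)
    have "FF n h0 = - (cos h0 ^ 3) * (-1) ^ 0" unfolding h0_def by (rule FF_hi)
    moreover have "cos h0 > 0" using h0p by (intro cos_gt_zero) auto
    ultimately have f: "FF n h0 \<noteq> 0" by simp
    have "(real n + 1) * h0 = pi/2" unfolding h0_def by (simp add: field_simps)
    then have s: "sin ((real n + 1) * h0) \<noteq> 0" by (simp only: sin_pi_half)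
    have "phiR n (2 * cos (2*h0)) \<noteq> 0" using root_iff[of n h0] h0p f s assms by auto
    then have "poly p (of_real (2 * cos (2*h0))) \<noteq> 0" unfolding p_def Phi_real by simp
    then show False using pz by simp
  qed
  define Z where "Z = {z. poly p z = 0}"
  have finZ: "finite Z" unfolding Z_def using p0 by (rule poly_roots_finite)
  define XC where "XC = complex_of_real ` X"
  have cardXC: "card XC = n" unfolding XC_def using cardX by (simp add: card_image inj_on_def)
  have finXC: "finite XC" unfolding XC_def using finX by simp
  have XCZ: "XC \<subseteq> Z" unfolding XC_def Z_def p_def using Xp by (auto simp: Phi_real)
  have twoXC: "2 \<notin> XC"
  proof
    assume "2 \<in> XC"
    then obtain x where "x \<in> X" "complex_of_real x = 2" unfolding XC_def by auto
    then have "x = 2" by (metis of_real_eq_iff of_real_numeral)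
    then show False using Xp[OF \<open>x \<in> X\<close>] by simp
  qed
  have p2: "poly p 2 = 0" unfolding p_def k by (rule Phi_2)
  have o2: "order 2 p \<ge> 2"
  proof -
    have pd: "pderiv p \<noteq> 0"
    proof
      assume "pderiv p = 0"
      then obtain c where "p = [:c:]" using pderiv_iszero by blast
      then show False using p0 p2 by simp
    qed
    have "order 2 p = Suc (order 2 (pderiv p))" by (rule order_pderiv[OF p0 p2])
    moreover have "order 2 (pderiv p) \<noteq> 0" using pd order_root[of "pderiv p" 2] Phi_d2[of k] unfolding p_def k by auto
    ultimately show ?thesis by simp
  qed
  have opos: "order z p \<ge> 1" if "z \<in> Z" for z
    using that p0 unfolding Z_def by (simp add: order_gt_0_iff Suc_le_eq)
  have sumZ: "sum (\<lambda>z. order z p) Z \<le> n + 2"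
    using sum_order_le_degree[OF p0] Phi_deg[of n] unfolding Z_def p_def by simp
  define R where "R = Z - insert 2 XC"
  have Zdec: "Z = insert 2 (XC \<union> R)" unfolding R_def using XCZ p2 unfolding Z_def by auto
  have finR: "finite R" unfolding R_def using finZ by simp
  have disj: "XC \<inter> R = {}" unfolding R_def by auto
  have sumdec: "sum (\<lambda>z. order z p) Z = order 2 p + sum (\<lambda>z. order z p) XC + sum (\<lambda>z. order z p) R"
  proof -
    have "2 \<notin> XC \<union> R" using twoXC unfolding R_def by auto
    then have "sum (\<lambda>z. order z p) Z = order 2 p + sum (\<lambda>z. order z p) (XC \<union> R)"
      unfolding Zdec using finXC finR by (simp add: sum.insert)
    also have "\<dots> = order 2 p + sum (\<lambda>z. order z p) XC + sum (\<lambda>z. order z p) R"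
      using finXC finR disj by (simp add: sum.union_disjoint)
    finally show ?thesis .
  qed
  have sXC: "sum (\<lambda>z. order z p) XC \<ge> n"
    using sum_ge_card[OF finXC, of "\<lambda>z. order z p"] opos XCZ cardXC by auto
  have sR: "sum (\<lambda>z. order z p) R \<ge> card R"
    using sum_ge_card[OF finR, of "\<lambda>z. order z p"] opos unfolding R_def by auto
  have "card R = 0" using sumZ sumdec sXC sR o2 by linarith
  then have R0: "R = {}" using finR by simp
  have Zeq: "Z = insert 2 XC" using Zdec R0 by simp
  have ord2: "order 2 p = 2" using sumZ sumdec sXC o2 by linarith
  have ord1: "order z p = 1" if "z \<in> XC" for z
  proof (rule ccontr)
    assume ne: "order z p \<noteq> 1"
    then have "order z p \<ge> 2" using opos[of z] that XCZ by auto
    moreover have "sum (\<lambda>z. order z p) (XC - {z}) \<ge> card (XC - {z})"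
      using sum_ge_card[of "XC - {z}" "\<lambda>z. order z p"] finXC opos XCZ by auto
    moreover have "card (XC - {z}) = n - 1" using cardXC that finXC by simp
    moreover have "sum (\<lambda>z. order z p) XC = order z p + sum (\<lambda>z. order z p) (XC - {z})"
      using finXC that by (simp add: sum.remove)
    moreover have "n \<ge> 1" using assms by simp
    ultimately show False using sumZ sumdec o2 by linarith
  qed
  have realset: "{x::real. poly (Phi n) (complex_of_real x) = 0} = insert 2 X"
  proof
    show "{x::real. poly (Phi n) (complex_of_real x) = 0} \<subseteq> insert 2 X"
    proof
      fix x assume "x \<in> {x::real. poly (Phi n) (complex_of_real x) = 0}"
      then have "complex_of_real x \<in> Z" unfolding Z_def p_def by simp
      then have "complex_of_real x = 2 \<or> complex_of_real x \<in> XC" unfolding Zeq by simp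
      then show "x \<in> insert 2 X" unfolding XC_def by (auto simp: of_real_eq_iff) (metis of_real_eq_iff of_real_numeral)
    qed
    show "insert 2 X \<subseteq> {x::real. poly (Phi n) (complex_of_real x) = 0}"
    proof -
      have "poly (Phi n) (complex_of_real 2) = 0" using p2 unfolding p_def by simp
      then show ?thesis using Xp by (auto simp: Phi_real simp del: of_real_numeral)
    qed
  qed
  have finS: "finite (insert 2 X)" using finX by simp
  have allgt: "\<forall>x\<in>insert 2 X. -2 < x" using Xp by auto
  have alpha_eq: "alpha n n = - 2 * cos (pi / real (n + 1))"
  proof -
    have "real n * pi / real (n + 1) = pi - pi / real (n + 1)" by (simp add: field_simps)
    then show ?thesis unfolding alpha_def by (simp add: cos_diff)
  qed
  have part1: "\<forall>z. poly (Phi n) z = 0 \<longrightarrow> z \<in> \<real>"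
  proof (intro allI impI)
    fix z assume "poly (Phi n) z = 0"
    then have "z \<in> Z" unfolding Z_def p_def by simp
    then have "z \<in> insert 2 XC" unfolding Zeq .
    then show "z \<in> \<real>" unfolding XC_def by auto
  qed
  have part3: "\<forall>z. poly (Phi n) z = 0 \<and> z \<noteq> 2 \<longrightarrow> order z (Phi n) = 1"
  proof (intro allI impI)
    fix z assume "poly (Phi n) z = 0 \<and> z \<noteq> 2"
    then have "z \<in> Z" "z \<noteq> 2" unfolding Z_def p_def by auto
    then have "z \<in> XC" unfolding Zeq by auto
    then show "order z (Phi n) = 1" using ord1 unfolding p_def by simp
  qed
  have part_even: "even n \<longrightarrow> Min (insert 2 X) = alpha n n"
  proof
    assume ev: "even n"
    define c where "c = real (n div 2) * pi / (real n + 1)"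
    have cH: "c \<in> H" and cb: "\<forall>h\<in>H. h \<le> c" using evH ev unfolding c_def by auto
    have c2: "2 * c = real n * pi / real (n + 1)"
    proof -
      have "real n = 2 * real (n div 2)" using ev by (metis dvd_mult_div_cancel of_nat_mult of_nat_numeral)
      then show ?thesis unfolding c_def by (simp add: field_simps)
    qed
    have gc: "g c = alpha n n" unfolding g_def alpha_def c2 ..
    have cpi: "2 * c \<le> pi" using rootsH cH by auto
    have le: "g c \<le> x" if xS: "x \<in> insert 2 X" for x
    proof -
      consider "x = 2" | h where "h \<in> H" "x = g h" using xS unfolding X_def by auto
      then show ?thesis
      proof cases
        case 1 then show ?thesis unfolding g_def by simp
      next
        case 2
        have "cos (2*c) \<le> cos (2*h)" using rootsH 2(1) cb cpi by (intro cos_monotone_0_pi_le) auto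
        then show ?thesis unfolding 2(2) g_def by simp
      qed
    qed
    have "g c \<in> insert 2 X" unfolding X_def using cH by auto
    then have "Min (insert 2 X) = g c" using le finS by (intro Min_eqI) auto
    then show "Min (insert 2 X) = alpha n n" using gc by simp
  qed
  have part_odd: "odd n \<longrightarrow> - 2 < Min (insert 2 X) \<and> Min (insert 2 X) < alpha n n"
  proof
    assume od: "odd n"
    obtain h where hH: "h \<in> H" and hgt: "real n * pi / (2 * (real n + 1)) < h" using odH od by auto
    have "cos (2*h) < cos (real n * pi / real (n + 1))"
    proof (rule cos_monotone_0_pi)
      show "0 \<le> real n * pi / real (n + 1)" by simp
      show "real n * pi / real (n + 1) < 2 * h" using hgt by (simp add: field_simps)
      show "2 * h \<le> pi" using rootsH hH by auto
    qed
    then have "g h < alpha n n" unfolding g_def alpha_def by simp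
    moreover have "Min (insert 2 X) \<le> g h" using finS hH unfolding X_def by (intro Min_le) auto
    moreover have "Min (insert 2 X) \<in> insert 2 X" using finS by (intro Min_in) auto
    ultimately show "- 2 < Min (insert 2 X) \<and> Min (insert 2 X) < alpha n n" using allgt by auto
  qed
  show ?thesis
    unfolding Let_def realset using part1 part3 ord2 part_even part_odd alpha_eq unfolding p_def by blast
qed

end
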